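(* Let $\mu\in\mathcal P_c^*(\mathbb R^2)$. Then the functions $\theta\mapsto\operatorname{mean}(\widehat{\mathcal R}_\theta[\mu])$ from $\mathbb S_1$ to $\mathbb R$ and $\theta\mapsto\operatorname{std}(\widehat{\mathcal R}_\theta[\mu])$ from $\mathbb S_1$ to $[0,\infty)$ are continuous.
   Context: $\mathbb S_1=\{x\in\mathbb R^2:\|x\|=1\}$; $\mathcal R_\theta[\mu]=(\langle\cdot,\theta\rangle)_\#\mu$. Fix a reference Borel probability measure $\rho$ on $\mathbb R$ without atoms. For a probability measure $\nu$ on $\mathbb R$ with $F_\nu(t)=\nu((-\infty,t])$, $F_\nu^{[-1]}(t)=\inf\{s:F_\nu(s)>t\}$ and the CDT is $\hat\nu=F_\nu^{[-1]}\circ F_\rho$; $\widehat{\mathcal R}_\theta[\mu]$ is the CDT of $\mathcal R_\theta[\mu]$. For $g\in L^2_\rho(\mathbb R)$, $\operatorname{mean}(g)=\int g\,\mathrm d\rho$, $\operatorname{std}(g)=(\int|g-\operatorname{mean}(g)|^2\mathrm d\rho)^{1/2}$. $\mathcal P_c^*(\mathbb R^2)$ is the set of compactly supported Borel probability measures on $\mathbb R^2$ whose support has affine hull of dimension $>1$. *)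

theory Defs
  imports "HOL-Probability.Probability"
begin

definition cdf_of :: "real measure \<Rightarrow> real \<Rightarrow> real" where
  "cdf_of \<nu> t = measure \<nu> {..t}"

definition gen_inv_cdf :: "real measure \<Rightarrow> real \<Rightarrow> real" where
  "gen_inv_cdf \<nu> t = Inf {s. cdf_of \<nu> s > t}"

definition CDT :: "real measure \<Rightarrow> real measure \<Rightarrow> real \<Rightarrow> real" where
  "CDT \<rho> \<nu> = gen_inv_cdf \<nu> \<circ> cdf_of \<rho>"

definition radon_proj :: "(real^2) measure \<Rightarrow> real^2 \<Rightarrow> real measure" where
  "radon_proj \<mu> \<theta> = distr \<mu> borel (\<lambda>x. x \<bullet> \<theta>)"

definition mean_rho :: "real measure \<Rightarrow> (real \<Rightarrow> real) \<Rightarrow> real" where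
  "mean_rho \<rho> g = (\<integral>x. g x \<partial>\<rho>)"

definition std_rho :: "real measure \<Rightarrow> (real \<Rightarrow> real) \<Rightarrow> real" where
  "std_rho \<rho> g = sqrt (\<integral>x. (g x - mean_rho \<rho> g)\<^sup>2 \<partial>\<rho>)"

definition measure_support :: "'a::topological_space measure \<Rightarrow> 'a set" where
  "measure_support \<mu> = {x. \<forall>U. open U \<and> x \<in> U \<longrightarrow> emeasure \<mu> U > 0}"

definition Pc_star :: "(real^2) measure \<Rightarrow> bool" where
  "Pc_star \<mu> \<longleftrightarrow> prob_space \<mu> \<and> sets \<mu> = sets borel \<and>
     compact (measure_support \<mu>) \<and> aff_dim (measure_support \<mu>) > 1"

end

theory Submission
  imports Defs
begin


lemma cdf_of_eq: "cdf_of = cdf" by (simp add: fun_eq_iff cdf_of_def cdf_def)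

context real_distribution
begin

lemma gi_bdd: assumes "0 < u" shows "bdd_below {s. cdf M s > u}"
proof -
  have "eventually (\<lambda>s. cdf M s < u) at_bot"
    using order_tendstoD(2)[OF cdf_lim_at_bot assms] .
  then obtain N where N: "\<And>s. s \<le> N \<Longrightarrow> cdf M s < u" by (auto simp: eventually_at_bot_linorder)
  show ?thesis
  proof (rule bdd_belowI)
    fix s assume "s \<in> {s. cdf M s > u}"
    then show "N \<le> s" using N[of s] by (cases "s \<le> N") auto
  qed
qed

lemma gi_ne: assumes "u < 1" shows "{s. cdf M s > u} \<noteq> {}"
proof -
  have "eventually (\<lambda>s. cdf M s > u) at_top"
    using order_tendstoD(1)[OF cdf_lim_at_top_prob assms] .
  then obtain N where N: "\<And>s. s \<ge> N \<Longrightarrow> cdf M s > u" by (auto simp: eventually_at_top_linorder)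
  then show ?thesis by auto
qed

lemma gi_le: assumes "0 < u" "u < cdf M t" shows "gen_inv_cdf M u \<le> t"
  unfolding gen_inv_cdf_def cdf_of_eq
  by (rule cInf_lower) (use assms gi_bdd in auto)

lemma gi_ge: assumes "0 < u" "u < 1" "gen_inv_cdf M u \<le> t" shows "u \<le> cdf M t"
proof (rule ccontr)
  assume "\<not> u \<le> cdf M t"
  then have lt: "cdf M t < u" by simp
  have "eventually (\<lambda>s. cdf M s < u) (at_right t)"
    using order_tendstoD(2)[OF cdf_is_right_cont[of t, unfolded continuous_within] lt] .
  then obtain b where b: "b > t" "\<And>y. t < y \<Longrightarrow> y < b \<Longrightarrow> cdf M y < u"
    by (auto simp: eventually_at_right_field)
  define s0 where "s0 = (t + b) / 2"
  have s0: "t < s0" "cdf M s0 < u" using b by (auto simp: s0_def)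
  have "s0 \<le> Inf {s. cdf M s > u}"
  proof (rule cInf_greatest)
    show "{s. cdf M s > u} \<noteq> {}" using gi_ne assms by auto
    fix s assume "s \<in> {s. cdf M s > u}"
    then show "s0 \<le> s" using s0 cdf_nondecreasing[of s s0] by (cases "s \<le> s0") auto
  qed
  then show False using assms(3) s0 unfolding gen_inv_cdf_def cdf_of_eq by simp
qed

lemma gi_mono: "mono_on {0<..<1} (gen_inv_cdf M)"
proof (rule mono_onI)
  fix u v :: real assume uv: "u \<in> {0<..<1}" "v \<in> {0<..<1}" "u \<le> v"
  show "gen_inv_cdf M u \<le> gen_inv_cdf M v"
    unfolding gen_inv_cdf_def cdf_of_eq
    by (rule cInf_superset_mono) (use uv gi_ne gi_bdd in auto)
qed

lemma gi_meas: "gen_inv_cdf M \<in> borel_measurable borel"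
proof -
  define h :: "real \<Rightarrow> real" where "h u = (if u < 0 then Inf (UNIV::real set) else if u = 0 then gen_inv_cdf M 0 else Inf ({}::real set))" for u
  have eq: "gen_inv_cdf M = (\<lambda>u. if u \<in> {0<..<1} then gen_inv_cdf M u else h u)"
  proof
    fix u :: real
    show "gen_inv_cdf M u = (if u \<in> {0<..<1} then gen_inv_cdf M u else h u)"
    proof (cases "u \<in> {0<..<1}")
      case False
      show ?thesis
      proof (cases "u < 0")
        case True
        then have "{s. cdf M s > u} = UNIV" using cdf_nonneg order_less_le_trans by blast
        then show ?thesis using True False by (simp add: h_def gen_inv_cdf_def cdf_of_eq)
      next
        case nn: False
        show ?thesis
        proof (cases "u = 0")
          case False
          then have "u \<ge> 1" using nn \<open>u \<notin> {0<..<1}\<close> by auto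
          have "\<And>s. cdf M s \<le> u" using cdf_bounded_prob \<open>u \<ge> 1\<close> order_trans by blast
          then have "{s. cdf M s > u} = {}" by (simp add: not_less)
          then show ?thesis using nn False \<open>u \<notin> {0<..<1}\<close> by (simp add: h_def gen_inv_cdf_def cdf_of_eq)
        qed (simp add: h_def)
      qed
    qed simp
  qed
  have "(\<lambda>u. if u \<in> {0<..<1} then gen_inv_cdf M u else h u) \<in> borel_measurable borel"
  proof (subst measurable_If_restrict_space_iff)
    show "{x \<in> space borel. x \<in> {0<..<1::real}} \<in> sets borel" by simp
    have hm: "h \<in> borel_measurable borel" unfolding h_def by measurable
    have e1: "{x::real. x \<in> {0<..<1}} = {0<..<1}" by blast
    show "gen_inv_cdf M \<in> borel_measurable (restrict_space borel {x. x \<in> {0<..<1}}) \<and>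
      h \<in> borel_measurable (restrict_space borel {x. x \<notin> {0<..<1}})"
      unfolding e1 by (intro conjI borel_measurable_mono_on_fnc[OF gi_mono] measurable_restrict_space1 hm)
  qed
  then show ?thesis using eq by simp
qed

end



context real_distribution
begin

lemma cdf_cont: assumes "\<And>x. measure M {x} = 0" shows "continuous_on UNIV (cdf M)"
  using isCont_cdf assms by (simp add: continuous_at_imp_continuous_on)

lemma U1: assumes atoml: "\<And>x. measure M {x} = 0" and c: "0 \<le> c"
  shows "measure M {x. cdf M x \<le> c} \<le> c"
proof -
  define S where "S = {x. cdf M x \<le> c}"
  have cl: "closed S" unfolding S_def
    by (rule closed_Collect_le) (use cdf_cont[OF atoml] in auto)
  show ?thesis
  proof (cases "S = {}")
    case True then show ?thesis using c by (simp add: S_def[symmetric])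
  next
    case ne: False
    show ?thesis
    proof (cases "bdd_above S")
      case False
      have "c \<ge> 1"
      proof (rule ccontr)
        assume "\<not> c \<ge> 1"
        then have "c < 1" by simp
        have "eventually (\<lambda>s. cdf M s > c) at_top"
          using order_tendstoD(1)[OF cdf_lim_at_top_prob \<open>c < 1\<close>] .
        then obtain N where N: "\<And>s. s \<ge> N \<Longrightarrow> cdf M s > c" by (auto simp: eventually_at_top_linorder)
        have "bdd_above S"
        proof (rule bdd_aboveI)
          fix x assume "x \<in> S" then show "x \<le> N" using N[of x] by (cases "x \<ge> N") (auto simp: S_def)
        qed
        then show False using False by simp
      qed
      then show ?thesis using prob_le_1[of "{x. cdf M x \<le> c}"] by linarith
    next
      case True
      define a where "a = Sup S"
      have aS: "a \<in> S" unfolding a_def by (rule closed_contains_Sup) (use ne True cl in auto)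
      have "S = {..a}"
      proof
        show "S \<subseteq> {..a}" using cSup_upper[OF _ True] by (auto simp: a_def)
        show "{..a} \<subseteq> S" using aS cdf_nondecreasing by (auto simp: S_def intro: order_trans)
      qed
      then have "measure M {x. cdf M x \<le> c} = cdf M a" by (simp add: S_def cdf_def)
      then show ?thesis using aS by (simp add: S_def)
    qed
  qed
qed

lemma U2: assumes atoml: "\<And>x. measure M {x} = 0" and c: "c \<le> 1"
  shows "measure M {x. cdf M x < c} \<ge> c"
proof -
  define S where "S = {x. cdf M x < c}"
  have op: "open S" unfolding S_def
    by (rule open_Collect_less) (use cdf_cont[OF atoml] in auto)
  show ?thesis
  proof (cases "c \<le> 0")
    case True then show ?thesis using measure_nonneg[of M "{x. cdf M x < c}"] by linarith
  next
    case cpos: False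
    show ?thesis
    proof (cases "bdd_above S")
      case False
      have "x \<in> S" for x
      proof -
        obtain y where "y \<in> S" "x \<le> y" using False by (meson bdd_aboveI linorder_le_cases)
        then show "x \<in> S" using cdf_nondecreasing[of x y] by (auto simp: S_def)
      qed
      then have "S = UNIV" by auto
      then show ?thesis using c prob_space by (simp add: S_def)
    next
      case True
      have "eventually (\<lambda>s. cdf M s < c) at_bot"
        using order_tendstoD(2)[OF cdf_lim_at_bot] cpos by simp
      then obtain N where N: "\<And>s. s \<le> N \<Longrightarrow> cdf M s < c" by (auto simp: eventually_at_bot_linorder)
      have ne: "S \<noteq> {}" using N[of N] by (auto simp: S_def)
      define a where "a = Sup S"
      have Fa: "cdf M a \<ge> c"
      proof (rule ccontr)
        assume "\<not> cdf M a \<ge> c"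
        then have lt: "cdf M a < c" by simp
        have "eventually (\<lambda>s. cdf M s < c) (at_right a)"
          using order_tendstoD(2)[OF cdf_is_right_cont[of a, unfolded continuous_within] lt] .
        then obtain b where b: "b > a" "\<And>y. a < y \<Longrightarrow> y < b \<Longrightarrow> cdf M y < c"
          by (auto simp: eventually_at_right_field)
        define s0 where "s0 = (a + b) / 2"
        have "s0 \<in> S" "a < s0" using b by (auto simp: s0_def S_def)
        then show False using cSup_upper[OF _ True, of s0] by (simp add: a_def)
      qed
      have sub: "{..<a} \<subseteq> S"
      proof
        fix x assume "x \<in> {..<a}"
        then obtain y where "y \<in> S" "x < y" using less_cSup_iff[OF ne True] by (auto simp: a_def)
        then show "x \<in> S" using cdf_nondecreasing[of x y] by (auto simp: S_def)
      qed
      have "measure M {..<a} = cdf M a"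
      proof (rule tendsto_unique[OF trivial_limit_at_left_real cdf_at_left])
        show "(cdf M \<longlongrightarrow> cdf M a) (at_left a)"
          using isCont_cdf[of a] atoml by (simp add: isCont_def filterlim_at_split)
      qed
      moreover have "measure M {..<a} \<le> measure M S"
        using sub op by (intro finite_measure_mono) auto
      ultimately show ?thesis using Fa by (simp add: S_def)
    qed
  qed
qed

end



lemma CDT_distr:
  assumes rho: "real_distribution \<rho>" and atoml: "\<And>x. measure \<rho> {x} = 0"
    and nu: "real_distribution \<nu>"
  shows "CDT \<rho> \<nu> \<in> borel_measurable \<rho>" "distr \<rho> borel (CDT \<rho> \<nu>) = \<nu>"
proof -
  interpret R: real_distribution \<rho> by fact
  interpret N: real_distribution \<nu> by fact
  let ?F = "cdf \<rho>" and ?G = "cdf \<nu>" and ?C = "CDT \<rho> \<nu>"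
  have Fm: "?F \<in> borel_measurable borel"
    by (rule borel_measurable_mono) (simp add: mono_def R.cdf_nondecreasing)
  have Cb: "?C \<in> borel_measurable borel"
    unfolding CDT_def cdf_of_eq using measurable_comp[OF Fm N.gi_meas] by (simp add: comp_def o_def)
  then show Cm: "?C \<in> borel_measurable \<rho>"
    by (simp add: measurable_cong_sets[OF R.events_eq_borel refl])
  have Fc: "continuous_on UNIV ?F" by (rule R.cdf_cont[OF atoml])
  define A where "A = {x. 0 < ?F x \<and> ?F x < 1}"
  have Aopen: "open A" unfolding A_def
    by (intro open_Collect_conj open_Collect_less) (use Fc in auto)
  have AE_A: "AE x in \<rho>. x \<in> A"
  proof (rule AE_I')
    let ?N = "{x. ?F x \<le> 0} \<union> {x. ?F x \<ge> 1}"
    have c1: "closed {x. ?F x \<le> 0}" "closed {x. ?F x \<ge> 1}"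
      by (intro closed_Collect_le; use Fc in auto)+
    have m1: "measure \<rho> {x. ?F x \<le> 0} = 0"
      using R.U1[OF atoml, of 0] measure_nonneg[of \<rho> "{x. ?F x \<le> 0}"] by linarith
    have "measure \<rho> {x. ?F x < 1} \<ge> 1" using R.U2[OF atoml, of 1] by simp
    moreover have "{x. ?F x \<ge> 1} = UNIV - {x. ?F x < 1}" by auto
    moreover have "open {x. ?F x < 1}" by (intro open_Collect_less) (use Fc in auto)
    ultimately have m2: "measure \<rho> {x. ?F x \<ge> 1} = 0"
      using R.prob_compl[of "{x. ?F x < 1}"] R.prob_le_1[of "{x. ?F x < 1}"] by simp
    have n1: "{x. ?F x \<le> 0} \<in> null_sets \<rho>" using m1 c1
      by (simp add: R.emeasure_eq_measure null_sets_def)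
    have n2: "{x. ?F x \<ge> 1} \<in> null_sets \<rho>" using m2 c1
      by (simp add: R.emeasure_eq_measure null_sets_def)
    show "?N \<in> null_sets \<rho>" by (intro null_sets.Un n1 n2)
    show "{x \<in> space \<rho>. x \<notin> A} \<subseteq> ?N" by (auto simp: A_def)
  qed
  have "cdf (distr \<rho> borel ?C) t = ?G t" for t
  proof -
    define c where "c = ?G t"
    have c01: "0 \<le> c" "c \<le> 1" using N.cdf_nonneg N.cdf_bounded_prob by (auto simp: c_def)
    define D where "D = {x. ?C x \<le> t}"
    have Dm: "D \<in> sets \<rho>"
    proof -
      have "D = ?C -` {..t} \<inter> space borel" by (auto simp: D_def)
      then show ?thesis using Cb by (auto simp: measurable_def)
    qed
    have Am: "A \<in> sets \<rho>" using Aopen by simp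
    have lo: "{x. ?F x < c} \<inter> A \<subseteq> D \<inter> A"
      by (auto simp: A_def D_def CDT_def cdf_of_eq c_def intro!: N.gi_le)
    have hi: "D \<inter> A \<subseteq> {x. ?F x \<le> c}"
      by (auto simp: A_def D_def CDT_def cdf_of_eq c_def intro!: N.gi_ge)
    have op: "open {x. ?F x < c}" by (intro open_Collect_less) (use Fc in auto)
    have cl: "closed {x. ?F x \<le> c}" by (intro closed_Collect_le) (use Fc in auto)
    have eqD: "measure \<rho> D = measure \<rho> (D \<inter> A)"
      by (rule measure_eq_AE) (use AE_A Dm Am in auto)
    have eqL: "measure \<rho> {x. ?F x < c} = measure \<rho> ({x. ?F x < c} \<inter> A)"
      by (rule measure_eq_AE) (use AE_A op Am in auto)
    have "measure \<rho> D \<le> c"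
      using eqD R.finite_measure_mono[OF hi] cl R.U1[OF atoml c01(1)] by simp
    moreover have "measure \<rho> D \<ge> c"
      using eqD eqL R.finite_measure_mono[OF lo] Dm Am R.U2[OF atoml c01(2)] by simp
    ultimately have "measure \<rho> D = c" by simp
    moreover have "cdf (distr \<rho> borel ?C) t = measure \<rho> D"
      unfolding cdf_def by (subst measure_distr[OF Cm]) (auto simp: D_def vimage_def)
    ultimately show ?thesis by (simp add: c_def)
  qed
  then show "distr \<rho> borel ?C = \<nu>"
    by (intro cdf_unique nu R.real_distribution_distr) (auto simp: Cm)
qed



lemma support_AE:
  fixes \<mu> :: "'a::{second_countable_topology} measure"
  assumes "sets \<mu> = sets borel"
  shows "AE x in \<mu>. x \<in> measure_support \<mu>"
proof -
  define F where "F = {U. open U \<and> emeasure \<mu> U = 0}"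
  have op: "\<And>S. S \<in> F \<Longrightarrow> open S" by (auto simp: F_def)
  obtain F' where F': "F' \<subseteq> F" "countable F'" "\<Union>F' = \<Union>F"
    using Lindelof[OF op] by blast
  have sp: "space \<mu> = UNIV" using sets_eq_imp_space_eq[OF assms] by simp
  have "\<Union>F' \<in> null_sets \<mu>"
  proof -
    have "(\<Union>U\<in>F'. U) \<in> null_sets \<mu>"
    proof (rule null_sets_UN')
      show "countable F'" by fact
      fix U assume "U \<in> F'"
      then have "open U" "emeasure \<mu> U = 0" using F' by (auto simp: F_def)
      then show "U \<in> null_sets \<mu>" using assms by (auto simp: null_sets_def)
    qed
    then show ?thesis by simp
  qed
  moreover have "{x \<in> space \<mu>. x \<notin> measure_support \<mu>} \<subseteq> \<Union>F'"
  proof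
    fix x assume "x \<in> {x \<in> space \<mu>. x \<notin> measure_support \<mu>}"
    then obtain U where "open U" "x \<in> U" "\<not> emeasure \<mu> U > 0"
      by (auto simp: measure_support_def)
    then have "U \<in> F" by (auto simp: F_def)
    then show "x \<in> \<Union>F'" using F'(3) \<open>x \<in> U\<close> by blast
  qed
  ultimately show ?thesis by (rule AE_I')
qed

lemma cont_param_integral:
  fixes f :: "'a \<Rightarrow> 'b::metric_space \<Rightarrow> real"
  assumes fin: "finite_measure M"
    and meas: "\<And>t. t \<in> S \<Longrightarrow> (\<lambda>x. f x t) \<in> borel_measurable M"
    and cont: "\<And>x. continuous_on S (f x)"
    and bnd: "AE x in M. \<forall>t\<in>S. \<bar>f x t\<bar> \<le> K"
  shows "continuous_on S (\<lambda>t. \<integral>x. f x t \<partial>M)"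
proof (rule continuous_on_sequentiallyI)
  fix u t assume u: "\<forall>n. u n \<in> S" and t: "t \<in> S" and lim: "u \<longlonglongrightarrow> t"
  show "(\<lambda>n. \<integral>x. f x (u n) \<partial>M) \<longlonglongrightarrow> \<integral>x. f x t \<partial>M"
  proof (rule integral_dominated_convergence[where w="\<lambda>x. K"])
    show "(\<lambda>x. f x t) \<in> borel_measurable M" using meas t by auto
    show "\<And>n. (\<lambda>x. f x (u n)) \<in> borel_measurable M" using meas u by auto
    show "integrable M (\<lambda>x. K)" using fin finite_measure.integrable_const by blast
    show "AE x in M. (\<lambda>n. f x (u n)) \<longlonglongrightarrow> f x t"
    proof (rule AE_I2)
      fix x show "(\<lambda>n. f x (u n)) \<longlonglongrightarrow> f x t"
        by (rule continuous_on_tendsto_compose[OF cont[of x] lim t]) (use u in auto)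
    qed
    show "\<And>n. AE x in M. norm (f x (u n)) \<le> K"
      using bnd u by (auto elim!: AE_mp)
  qed
qed

theorem lemma5:
  fixes \<rho> :: "real measure" and \<mu> :: "(real^2) measure"
  assumes "prob_space \<rho>" and "sets \<rho> = sets borel"
    and "\<And>x. measure \<rho> {x} = 0"
    and "Pc_star \<mu>"
  shows "continuous_on (sphere 0 1) (\<lambda>\<theta>. mean_rho \<rho> (CDT \<rho> (radon_proj \<mu> \<theta>))) \<and>
    continuous_on (sphere 0 1) (\<lambda>\<theta>. std_rho \<rho> (CDT \<rho> (radon_proj \<mu> \<theta>)))"
proof -
  have rho: "real_distribution \<rho>" using assms(1,2) by (simp add: real_distribution_def real_distribution_axioms_def)
  have pmu: "prob_space \<mu>" and smu[measurable_cong]: "sets \<mu> = sets borel"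
    and cK: "compact (measure_support \<mu>)" using assms(4) by (auto simp: Pc_star_def)
  interpret P: prob_space \<mu> by fact
  obtain B where B: "B > 0" "\<And>x. x \<in> measure_support \<mu> \<Longrightarrow> norm x \<le> B"
    using compact_imp_bounded[OF cK] by (auto simp: bounded_pos)
  have AEB: "AE x in \<mu>. norm x \<le> B"
    using support_AE[OF smu] by eventually_elim (use B in auto)
  have pm: "(\<lambda>x. x \<bullet> \<theta>) \<in> borel_measurable \<mu>" for \<theta> :: "real^2" by measurable
  have nu: "real_distribution (radon_proj \<mu> \<theta>)" for \<theta>
    unfolding radon_proj_def using pm by (intro P.real_distribution_distr) simp
  define m where "m \<theta> = (\<integral>x. x \<bullet> \<theta> \<partial>\<mu>)" for \<theta> :: "real^2"
  have key: "(\<integral>x. g (CDT \<rho> (radon_proj \<mu> \<theta>) x) \<partial>\<rho>) = (\<integral>x. g (x \<bullet> \<theta>) \<partial>\<mu>)"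
    if g: "g \<in> borel_measurable borel" for g :: "real \<Rightarrow> real" and \<theta>
  proof -
    note C = CDT_distr[OF rho assms(3) nu[of \<theta>]]
    have "(\<integral>x. g (CDT \<rho> (radon_proj \<mu> \<theta>) x) \<partial>\<rho>) = integral\<^sup>L (distr \<rho> borel (CDT \<rho> (radon_proj \<mu> \<theta>))) g"
      by (rule integral_distr[symmetric]) (use C g in auto)
    also have "\<dots> = integral\<^sup>L (radon_proj \<mu> \<theta>) g" using C by simp
    also have "\<dots> = (\<integral>x. g (x \<bullet> \<theta>) \<partial>\<mu>)"
      unfolding radon_proj_def by (rule integral_distr) (use pm g in auto)
    finally show ?thesis .
  qed
  have mean: "mean_rho \<rho> (CDT \<rho> (radon_proj \<mu> \<theta>)) = m \<theta>" for \<theta>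
    unfolding mean_rho_def m_def using key[of "\<lambda>y. y" \<theta>] by simp
  have std: "std_rho \<rho> (CDT \<rho> (radon_proj \<mu> \<theta>)) = sqrt (\<integral>x. (x \<bullet> \<theta> - m \<theta>)\<^sup>2 \<partial>\<mu>)" for \<theta>
    unfolding std_rho_def mean using key[of "\<lambda>y. (y - m \<theta>)\<^sup>2" \<theta>] by simp
  have ipb: "AE x in \<mu>. \<forall>\<theta>\<in>sphere 0 1. \<bar>x \<bullet> \<theta>\<bar> \<le> B"
    using AEB
  proof eventually_elim
    case (elim x)
    show ?case
    proof
      fix \<theta> :: "real^2" assume "\<theta> \<in> sphere 0 1"
      then have "norm \<theta> = 1" by simp
      then show "\<bar>x \<bullet> \<theta>\<bar> \<le> B" using Cauchy_Schwarz_ineq2[of x \<theta>] elim by simp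
    qed
  qed
  have mc: "continuous_on (sphere 0 1) m"
    unfolding m_def
    by (rule cont_param_integral[OF P.finite_measure_axioms pm _ ipb]) (intro continuous_intros)
  have mb: "\<bar>m \<theta>\<bar> \<le> B" if "\<theta> \<in> sphere 0 1" for \<theta>
  proof -
    have ab: "AE x in \<mu>. \<bar>x \<bullet> \<theta>\<bar> \<le> B" using ipb by eventually_elim (use that in auto)
    have int: "integrable \<mu> (\<lambda>x. x \<bullet> \<theta>)"
      by (rule P.integrable_const_bound[where B=B]) (use ab pm in auto)
    have "m \<theta> \<le> B" unfolding m_def
      by (rule P.integral_le_const[OF int]) (use ab in auto)
    moreover have "- m \<theta> \<le> B" unfolding m_def integral_minus[symmetric]
      by (rule P.integral_le_const) (use ab int in auto)
    ultimately show ?thesis by simp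
  qed
  have vc: "continuous_on (sphere 0 1) (\<lambda>\<theta>. \<integral>x. (x \<bullet> \<theta> - m \<theta>)\<^sup>2 \<partial>\<mu>)"
  proof (rule cont_param_integral[where K="(2*B)\<^sup>2", OF P.finite_measure_axioms])
    show "(\<lambda>x. (x \<bullet> \<theta> - m \<theta>)\<^sup>2) \<in> borel_measurable \<mu>" for \<theta> by measurable
    show "continuous_on (sphere 0 1) (\<lambda>\<theta>. (x \<bullet> \<theta> - m \<theta>)\<^sup>2)" for x
      by (intro continuous_intros mc)
    show "AE x in \<mu>. \<forall>\<theta>\<in>sphere 0 1. \<bar>(x \<bullet> \<theta> - m \<theta>)\<^sup>2\<bar> \<le> (2 * B)\<^sup>2"
      using ipb
    proof eventually_elim
      case (elim x)
      show ?case
      proof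
        fix \<theta> :: "real^2" assume th: "\<theta> \<in> sphere 0 1"
        have "\<bar>x \<bullet> \<theta>\<bar> \<le> B" using elim th by blast
        then have ab2: "\<bar>x \<bullet> \<theta> - m \<theta>\<bar> \<le> 2 * B" using mb[OF th] by linarith
        show "\<bar>(x \<bullet> \<theta> - m \<theta>)\<^sup>2\<bar> \<le> (2 * B)\<^sup>2"
          using power_mono[OF ab2 abs_ge_zero, of 2] by simp
      qed
    qed
  qed
  have sc: "continuous_on (sphere 0 1) (\<lambda>\<theta>. sqrt (\<integral>x. (x \<bullet> \<theta> - m \<theta>)\<^sup>2 \<partial>\<mu>))"
    by (intro continuous_intros vc)
  show ?thesis
    unfolding mean std using mc sc by simp
qed


end
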